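(* Let $M,N,d_f,d_t$ be positive integers with $d_f\mid M$ and $d_t\mid N$, with $N/(2d_t)$ an integer, and let $T>0$, $\Delta f>0$. Consider a doubly selective channel with $P$ paths having complex gains $h_1,\dots,h_P$, delays $\tau_1,\dots,\tau_P\ge 0$ and Dopplers $\nu_1,\dots,\nu_P\in\mathbb{R}$, and set $l_i=M\Delta f\,\tau_i$, $k_i=NT\,\nu_i$. Define, for all integers $k,l$, the original CSF $$h_{\rm DD}[k,l]=\sum_{i=1}^P h_i\sum_{m=0}^{M-1}\frac{1}{\sqrt M}e^{-j2\pi m\frac{l_i-l}{M}}\sum_{n=0}^{N-1}\frac{1}{\sqrt N}e^{j2\pi n\frac{k_i-k}{N}},$$ and the periodic CSF obtained from pilots on the lattice $m\in\{0,d_f,2d_f,\dots\}$, $n\in\{0,d_t,2d_t,\dots\}$, $$h^{\rm Periodic}_{\rm DD}[k,l]=\sum_{i=1}^P h_i\sum_{m'=0}^{M/d_f-1}\frac{1}{\sqrt{\tilde M}}e^{-j2\pi m' d_f\frac{l_i-l}{M}}\sum_{n'=0}^{N/d_t-1}\frac{1}{\sqrt{\tilde N}}e^{j2\pi n' d_t\frac{k_i-k}{N}},$$ with $\tilde M=M/d_f^2$ and $\tilde N=N/d_t^2$. Suppose (i) every delay and Doppler is on-grid, i.e. $l_i\in\mathbb{Z}$ and $k_i\in\mathbb{Z}$ (resolutions $\frac{1}{M\Delta f}$ and $\frac{1}{NT}$), and (ii) $\nu_i\in\left[-\frac{1}{2d_tT},\frac{1}{2d_tT}-\frac{1}{NT}\right]$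 and $\tau_i\in\left[0,\frac{1}{d_f\Delta f}-\frac{1}{M\Delta f}\right]$ for all $i$. Then for all $k\in\{-\frac{N}{2d_t},-\frac{N}{2d_t}+1,\dots,\frac{N}{2d_t}-1\}$ and all $l\in\{0,1,\dots,\frac{M}{d_f}-1\}$, $h^{\rm Periodic}_{\rm DD}[k,l]=h_{\rm DD}[k,l]$, i.e. one period of the periodic CSF exactly represents the original CSF.
   Context: Setting: OFDM with $N$ symbols of duration $T$ and $M$ subcarriers of spacing $\Delta f$; the sampled channel transfer function is $h_{\rm TF}[m,n]=\sum_{i=1}^P h_i e^{j2\pi\nu_i nT}e^{-j2\pi\tau_i m\Delta f}$, and the CSF $h_{\rm DD}$ is its DFT along time ($n$) and inverse DFT along frequency ($m$), as written explicitly in the claim. The periodic CSF is the same transform applied to the CTF sampled only at pilot positions $m\in\{0,d_f,\dots,M-d_f\}$, $n\in\{0,d_t,\dots,N-d_t\}$ (zero elsewhere), with scaling factors $\tilde M,\tilde N$ as given; it is periodic with periods $N/d_t$ in $k$ and $M/d_f$ in $l$. Here $j=\sqrt{-1}$. *)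

theory Defs
  imports "HOL-Analysis.Analysis"
begin

definition delay_idx :: "nat \<Rightarrow> real \<Rightarrow> real \<Rightarrow> real" where
  "delay_idx M df_sp tau_i = real M * df_sp * tau_i"

definition doppler_idx :: "nat \<Rightarrow> real \<Rightarrow> real \<Rightarrow> real" where
  "doppler_idx N T nu_i = real N * T * nu_i"

definition hDD ::
  "nat \<Rightarrow> nat \<Rightarrow> real \<Rightarrow> real \<Rightarrow> nat \<Rightarrow> (nat \<Rightarrow> complex) \<Rightarrow> (nat \<Rightarrow> real)
   \<Rightarrow> (nat \<Rightarrow> real) \<Rightarrow> int \<Rightarrow> int \<Rightarrow> complex" where
  "hDD M N Df T P h tau nu k l =
    (\<Sum>i\<in>{1..P}. h i *
      (\<Sum>m<M. (1 / complex_of_real (sqrt (real M))) *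
         exp (- (2 * pi * \<i>) * complex_of_real (real m * (delay_idx M Df (tau i) - real_of_int l) / real M))) *
      (\<Sum>n<N. (1 / complex_of_real (sqrt (real N))) *
         exp ((2 * pi * \<i>) * complex_of_real (real n * (doppler_idx N T (nu i) - real_of_int k) / real N))))"

definition hDD_periodic ::
  "nat \<Rightarrow> nat \<Rightarrow> nat \<Rightarrow> nat \<Rightarrow> real \<Rightarrow> real \<Rightarrow> nat \<Rightarrow> (nat \<Rightarrow> complex) \<Rightarrow> (nat \<Rightarrow> real)
   \<Rightarrow> (nat \<Rightarrow> real) \<Rightarrow> int \<Rightarrow> int \<Rightarrow> complex" where
  "hDD_periodic M N d_f d_t Df T P h tau nu k l =
    (let Mt = real M / (real d_f)^2; Nt = real N / (real d_t)^2 in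
    (\<Sum>i\<in>{1..P}. h i *
      (\<Sum>m'<M div d_f. (1 / complex_of_real (sqrt Mt)) *
         exp (- (2 * pi * \<i>) * complex_of_real (real m' * real d_f * (delay_idx M Df (tau i) - real_of_int l) / real M))) *
      (\<Sum>n'<N div d_t. (1 / complex_of_real (sqrt Nt)) *
         exp ((2 * pi * \<i>) * complex_of_real (real n' * real d_t * (doppler_idx N T (nu i) - real_of_int k) / real N)))))"

end

theory Submission
  imports Defs
begin

lemma geo:
  fixes a :: int and L :: nat
  assumes "L > 0"
  shows "(\<Sum>m<L. exp (2 * pi * \<i> * complex_of_real (real m * of_int a / real L))) = (if int L dvd a then of_nat L else 0)"
proof -
  define z where "z = exp (2 * pi * \<i> * complex_of_real (of_int a / real L))"
  have t: "exp (2 * pi * \<i> * complex_of_real (real m * of_int a / real L)) = z ^ m" for m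
    unfolding z_def by (subst exp_of_nat_mult[symmetric]) (simp add: field_simps)
  have z1: "z = 1 \<longleftrightarrow> int L dvd a"
  proof
    assume "z = 1"
    then obtain n :: int where "2 * pi * (of_int a / real L) = 2 * pi *  of_int n"
      unfolding z_def exp_eq_1 by auto
    hence "of_int a = real L * of_int n" using assms by (simp add: field_simps)
    hence "a = int L * n" by (metis of_int_eq_iff of_int_mult of_int_of_nat_eq)
    thus "int L dvd a" by simp
  next
    assume "int L dvd a"
    then obtain n where "a = int L * n" by auto
    hence "2 * pi * \<i> * complex_of_real (of_int a / real L) = 2 * pi *  of_int n*\<i>" using assms by simp
    thus "z = 1" unfolding z_def by (simp add: exp_eq_1)
  qed
  have zL: "z ^ L = 1"
    using t[of L] assms unfolding exp_eq_1 by (simp add: exp_eq_1 flip: t)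
  show ?thesis
    unfolding t using z1 zL by (auto simp: sum_gp_strict)
qed

lemma dvd_small: fixes a::int and K::nat assumes "\<bar>a\<bar> < int K" "K \<le> L" shows "int L dvd a \<longleftrightarrow> a = 0"
proof
  assume "int L dvd a"
  then obtain n where "a = int L * n" by auto
  show "a = 0"
  proof (rule ccontr)
    assume "a \<noteq> 0"
    hence "n \<noteq> 0" using \<open>a = int L * n\<close> by simp
    hence "\<bar>n\<bar> \<ge> 1" by simp
    hence "int L * 1 \<le> int L * \<bar>n\<bar>" by (intro mult_left_mono) auto
    hence "\<bar>a\<bar> \<ge> int L" using \<open>a = int L * n\<close> by (simp add: abs_mult)
    with assms show False by simp
  qed
qed simp

lemma coreA:
  fixes a :: int and L d :: nat
  assumes "L > 0" "d > 0" "d dvd L" "\<bar>a\<bar> < int (L div d)"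
  shows "(\<Sum>m<L. 1 / complex_of_real (sqrt (real L)) * exp (2 * pi * \<i> * complex_of_real (real m * of_int a / real L)))
     = (if a = 0 then complex_of_real (sqrt (real L)) else 0)"
proof -
  have "L div d \<le> L" by simp
  hence e: "int L dvd a \<longleftrightarrow> a = 0" using dvd_small assms(4) by blast
  have "(\<Sum>m<L. 1 / complex_of_real (sqrt (real L)) * exp (2 * pi * \<i> * complex_of_real (real m * of_int a / real L)))
     = 1 / complex_of_real (sqrt (real L)) * (if int L dvd a then of_nat L else 0)"
    unfolding sum_distrib_left[symmetric] geo[OF assms(1)] by (rule refl)
  also have "\<dots> = (if a = 0 then complex_of_real (sqrt (real L)) else 0)"
  proof (cases "a = 0")
    case True
    have "1 / sqrt (real L) * real L = sqrt (real L)"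
      using assms(1) by (simp add: field_simps)
    hence "complex_of_real (1 / sqrt (real L) * real L) = complex_of_real (sqrt (real L))" by simp
    thus ?thesis using True e by simp
  qed (use e in simp)
  finally show ?thesis .
qed

lemma coreB:
  fixes a :: int and L d :: nat
  assumes "L > 0" "d > 0" "d dvd L" "\<bar>a\<bar> < int (L div d)"
  shows "(\<Sum>m<L div d. 1 / complex_of_real (sqrt (real L / (real d)^2)) * exp (2 * pi * \<i> * complex_of_real (real m * real d * of_int a / real L)))
     = (if a = 0 then complex_of_real (sqrt (real L)) else 0)"
proof -
  obtain K where L: "L = d * K" using assms(3) by auto
  have K: "K > 0" "L div d = K" using L assms by auto
  have e: "int K dvd a \<longleftrightarrow> a = 0" using dvd_small assms(4) K by blast
  have r: "real m * real d * of_int a / real L = real m * of_int a / real K" for m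
    using L assms K by (simp add: field_simps)
  have s: "sqrt (real L / (real d)^2) = sqrt (real L) / real d"
    using assms by (simp add: real_sqrt_divide)
  have "(\<Sum>m<L div d. 1 / complex_of_real (sqrt (real L / (real d)^2)) * exp (2 * pi * \<i> * complex_of_real (real m * real d * of_int a / real L)))
     = 1 / complex_of_real (sqrt (real L / (real d)^2)) * (if int K dvd a then of_nat K else 0)"
    unfolding r K(2) sum_distrib_left[symmetric] geo[OF K(1)] by (rule refl)
  also have "\<dots> = (if a = 0 then complex_of_real (sqrt (real L)) else 0)"
  proof (cases "a = 0")
    case True
    have "real d / sqrt (real L) * real K = sqrt (real L)"
      using L assms K by (simp add: field_simps)
    hence "complex_of_real (real d / sqrt (real L) * real K) = complex_of_real (sqrt (real L))" by simp
    thus ?thesis using True e s by simp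
  qed (use e in simp)
  finally show ?thesis .
qed
theorem theorem1:
  fixes M N d_f d_t P :: nat and T Df :: real
    and h :: "nat \<Rightarrow> complex" and tau nu :: "nat \<Rightarrow> real"
  assumes "M > 0" "N > 0" "d_f > 0" "d_t > 0"
    and "d_f dvd M" "d_t dvd N" "(2 * d_t) dvd N"
    and "T > 0" "Df > 0"
    and "\<forall>i\<in>{1..P}. tau i \<ge> 0"
    and "\<forall>i\<in>{1..P}. delay_idx M Df (tau i) \<in> \<int> \<and> doppler_idx N T (nu i) \<in> \<int>"
    and "\<forall>i\<in>{1..P}. - 1 / (2 * real d_t * T) \<le> nu i \<and>
                      nu i \<le> 1 / (2 * real d_t * T) - 1 / (real N * T)"
    and "\<forall>i\<in>{1..P}. 0 \<le> tau i \<and> tau i \<le> 1 / (real d_f * Df) - 1 / (real M * Df)"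
  shows "\<forall>k l. - int (N div (2 * d_t)) \<le> k \<and> k \<le> int (N div (2 * d_t)) - 1 \<and>
                0 \<le> l \<and> l \<le> int (M div d_f) - 1 \<longrightarrow>
           hDD_periodic M N d_f d_t Df T P h tau nu k l = hDD M N Df T P h tau nu k l"
proof (intro allI impI)
  fix k l :: int
  assume kl: "- int (N div (2 * d_t)) \<le> k \<and> k \<le> int (N div (2 * d_t)) - 1 \<and>
                0 \<le> l \<and> l \<le> int (M div d_f) - 1"
  obtain KM where KM: "M = d_f * KM" using assms(5) by auto
  obtain KN where KN: "N = (2 * d_t) * KN" using assms(7) by auto
  have KMd: "M div d_f = KM" using KM assms(3) by simp
  have KNd: "N div (2 * d_t) = KN" "N div d_t = 2 * KN" using KN assms(4) by auto
  show "hDD_periodic M N d_f d_t Df T P h tau nu k l = hDD M N Df T P h tau nu k l"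
    unfolding hDD_periodic_def hDD_def Let_def
  proof (rule sum.cong[OF refl])
    fix i assume i: "i \<in> {1..P}"
    have "delay_idx M Df (tau i) \<in> \<int>" using assms(11) i by blast
    then obtain li where li: "delay_idx M Df (tau i) = of_int li" by (rule Ints_cases)
    have "doppler_idx N T (nu i) \<in> \<int>" using assms(11) i by blast
    then obtain ki where ki: "doppler_idx N T (nu i) = of_int ki" by (rule Ints_cases)
    have tb: "0 \<le> tau i" "tau i \<le> 1 / (real d_f * Df) - 1 / (real M * Df)" using assms(13) i by auto
    have nb: "- 1 / (2 * real d_t * T) \<le> nu i" "nu i \<le> 1 / (2 * real d_t * T) - 1 / (real N * T)"
      using assms(12) i by auto
    have "real M * Df * tau i \<le> real M * Df * (1 / (real d_f * Df) - 1 / (real M * Df))"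
      using tb assms by (intro mult_left_mono) auto
    also have "\<dots> = real KM - 1" using KM assms by (simp add: field_simps)
    finally have li1: "of_int li \<le> real KM - 1" using li unfolding delay_idx_def by simp
    have "0 \<le> real M * Df * tau i" using tb assms by simp
    hence li0: "0 \<le> (of_int li :: real)" using li unfolding delay_idx_def by simp
    have "real N * T * nu i \<le> real N * T * (1 / (2 * real d_t * T) - 1 / (real N * T))"
      using nb assms by (intro mult_left_mono) auto
    also have "\<dots> = real KN - 1" using KN assms by (simp add: field_simps)
    finally have ki1: "of_int ki \<le> real KN - 1" using ki unfolding doppler_idx_def by simp
    have "real N * T * (- 1 / (2 * real d_t * T)) \<le> real N * T * nu i"
      using nb assms by (intro mult_left_mono) auto
    moreover have "real N * T * (- 1 / (2 * real d_t * T)) = - real KN" using KN assms by (simp add: field_simps)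
    ultimately have ki0: "- real KN \<le> of_int ki" using ki unfolding doppler_idx_def by simp
    have li': "0 \<le> li" "li \<le> int KM - 1" using li0 li1 by linarith+
    have ki': "- int KN \<le> ki" "ki \<le> int KN - 1" using ki0 ki1 by linarith+
    have aM: "\<bar>l - li\<bar> < int (M div d_f)" using kl li' KMd by auto
    have aN: "\<bar>ki - k\<bar> < int (N div d_t)" using kl ki' KNd by auto
    have e1: "exp (- (2 * pi * \<i>) * complex_of_real (real m * (delay_idx M Df (tau i) - real_of_int l) / real M))
      = exp (2 * pi * \<i> * complex_of_real (real m * of_int (l - li) / real M))" for m
      by (rule arg_cong[where f=exp]) (simp add: li field_simps)
    have e2: "exp (- (2 * pi * \<i>) * complex_of_real (real m * real d_f * (delay_idx M Df (tau i) - real_of_int l) / real M))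
      = exp (2 * pi * \<i> * complex_of_real (real m * real d_f * of_int (l - li) / real M))" for m
      by (rule arg_cong[where f=exp]) (simp add: li field_simps)
    have e3: "exp (2 * pi * \<i> * complex_of_real (real m * (doppler_idx N T (nu i) - real_of_int k) / real N))
      = exp (2 * pi * \<i> * complex_of_real (real m * of_int (ki - k) / real N))" for m
      by (simp add: ki)
    have e4: "exp (2 * pi * \<i> * complex_of_real (real m * real d_t * (doppler_idx N T (nu i) - real_of_int k) / real N))
      = exp (2 * pi * \<i> * complex_of_real (real m * real d_t * of_int (ki - k) / real N))" for m
      by (simp add: ki)
    show "h i * (\<Sum>m'<M div d_f. 1 / complex_of_real (sqrt (real M / (real d_f)\<^sup>2)) *
           exp (- (2 * pi * \<i>) * complex_of_real (real m' * real d_f * (delay_idx M Df (tau i) - real_of_int l) / real M))) *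
         (\<Sum>n'<N div d_t. 1 / complex_of_real (sqrt (real N / (real d_t)\<^sup>2)) *
           exp (2 * pi * \<i> * complex_of_real (real n' * real d_t * (doppler_idx N T (nu i) - real_of_int k) / real N))) =
         h i * (\<Sum>m<M. 1 / complex_of_real (sqrt (real M)) *
           exp (- (2 * pi * \<i>) * complex_of_real (real m * (delay_idx M Df (tau i) - real_of_int l) / real M))) *
         (\<Sum>n<N. 1 / complex_of_real (sqrt (real N)) *
           exp (2 * pi * \<i> * complex_of_real (real n * (doppler_idx N T (nu i) - real_of_int k) / real N)))"
      unfolding e1 e2 e3 e4
      using coreA[OF assms(1) assms(3) assms(5) aM] coreB[OF assms(1) assms(3) assms(5) aM]
            coreA[OF assms(2) assms(4) assms(6) aN] coreB[OF assms(2) assms(4) assms(6) aN]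
      by simp
  qed
qed

end
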